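(* Let $A$ be a finite alphabet and let $\mathbf{w},\mathbf{w}'$ be infinite LSP words over $A$ such that $\mathbf{w}=f(\mathbf{w}')$ for a bLSP morphism $f$ on $A$. Let $q$ be the state $({\rm alph}(\mathbf{w}),f,F(\mathbf{w}))$ and let $q'$ be a state $({\rm alph}(\mathbf{w}'),g,F(\mathbf{w}'))$ where $g$ is any bLSP morphism on $A$ such that $\mathbf{w}'=g(\mathbf{w}'')$ for some infinite word $\mathbf{w}''$, and where $F(\mathbf{x})$ denotes the set of all 5-tuples $(a,b,c,\beta,\gamma)$ such that $\mathbf{x}$ has an $(a,b,c,\beta,\gamma)$-fragility. Then $(q,f,q')$ is a transition of the automaton ${\cal A}_{\rm bLSP}$.
   Context: A finite word $u$ is a left special factor of a word $w$ if there are distinct letters $x\neq y$ with $xu$ and $yu$ factors of $w$. A word is LSP if every left special factor of it is a prefix of it. A bLSP morphism on $A$ is an endomorphism $f$ of $A^*$ such that there is a letter $\alpha$ with $f(\alpha)=\alpha$ and, for every letter $\beta\neq\alpha$, there is a letter $\gamma$ with $f(\beta)=f(\gamma)\beta$; this $\alpha$ is unique and denoted ${\rm first}(f)$. For pairwise distinct letters $a,b,c$ and distinct letters $\beta\neq\gamma$, a finite word $u$ is an $(a,b,c,\beta,\gamma)$-fragility of an infinite word $\mathbf{x}$ if $ua$ is a prefix of $\mathbf{x}$ and $\beta ub$, $\gamma uc$ are factors of $\mathbf{x}$; $\mathbf{x}$ is $(a,b,c)$-fragile if it has an $(a,b,c,\beta,\gamma)$-fragility for some $\beta\neq\gamma$.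 A morphism $f$ is LSP $(a,b,c)$-breaking if for every $(a,b,c)$-fragile infinite LSP word $\mathbf{x}$, $f(\mathbf{x})$ is not LSP. ${\rm Fact}(X)$ is the set of factors of words in $X$, ${\rm pref}(w)$ the set of prefixes of $w$, ${\rm alph}(w)$ the set of letters of $w$. The automaton ${\cal A}_{\rm bLSP}$: states are triples $q=({\rm alph}(q),{\rm bLSP}(q),{\rm set}(q))$ with ${\rm alph}(q)\subseteq A$, ${\rm bLSP}(q)$ a bLSP morphism on $A$, ${\rm set}(q)\subseteq A^5$; input letters are bLSP morphisms on $A$. A triple $(q,f,q')$ is a transition iff: (1) $f={\rm bLSP}(q)$; (2) ${\rm alph}(q)={\rm alph}(f({\rm alph}(q')))$; (3) for every $(a,b,c,\beta,\gamma)\in{\rm set}(q')$, $f$ is not LSP $(a,b,c)$-breaking; (4) ${\rm set}(q)$ is exactly the set of 5-tuples $(a,b,c,\beta,\gamma)$ of letters of ${\rm alph}(q)$ with $a,b,c$ pairwise distinct, $\beta\neq\gamma$, and such that either (a) $a={\rm first}(f)$ and $\beta b,\gamma c\in{\rm Fact}(f({\rm alph}(q')))$, or (b) there exist letters $a',b',c'$ with $(a',b',c',\beta,\gamma)\in{\rm set}(q')$ and a word $x$ with $xa\in{\rm pref}(f(a')\alpha)$, $xb\in{\rm pref}(f(b')\alpha)$, $xc\in{\rm pref}(f(c')\alpha)$, where $\alpha={\rm first}(f)$. *)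

theory Defs
  imports Main
begin

text \<open>The alphabet A is the finite type 'a. Finite words are lists, infinite
words are functions nat \<Rightarrow> 'a, morphisms are maps 'a \<Rightarrow> 'a list.\<close>

definition inf_pref :: "nat \<Rightarrow> (nat \<Rightarrow> 'a) \<Rightarrow> 'a list" where
  "inf_pref n x = map x [0..<n]"

definition is_prefix_inf :: "'a list \<Rightarrow> (nat \<Rightarrow> 'a) \<Rightarrow> bool" where
  "is_prefix_inf u x \<longleftrightarrow> u = inf_pref (length u) x"

definition is_factor_inf :: "'a list \<Rightarrow> (nat \<Rightarrow> 'a) \<Rightarrow> bool" where
  "is_factor_inf u x \<longleftrightarrow> (\<exists>i. u = map x [i..<i + length u])"

definition left_special :: "'a list \<Rightarrow> (nat \<Rightarrow> 'a) \<Rightarrow> bool" where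
  "left_special u x \<longleftrightarrow>
     (\<exists>c d. c \<noteq> d \<and> is_factor_inf (c # u) x \<and> is_factor_inf (d # u) x)"

definition LSP :: "(nat \<Rightarrow> 'a) \<Rightarrow> bool" where
  "LSP x \<longleftrightarrow> (\<forall>u. left_special u x \<longrightarrow> is_prefix_inf u x)"

definition morph :: "('a \<Rightarrow> 'a list) \<Rightarrow> 'a list \<Rightarrow> 'a list" where
  "morph f u = concat (map f u)"

text \<open>Image of an infinite word under a non-erasing morphism (all bLSP morphisms
are non-erasing): the n-th letter of f(x) is the n-th letter of f(x_0...x_n).\<close>
definition morph_inf :: "('a \<Rightarrow> 'a list) \<Rightarrow> (nat \<Rightarrow> 'a) \<Rightarrow> (nat \<Rightarrow> 'a)" where
  "morph_inf f x = (\<lambda>n. morph f (inf_pref (Suc n) x) ! n)"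

definition bLSP_with :: "('a \<Rightarrow> 'a list) \<Rightarrow> 'a \<Rightarrow> bool" where
  "bLSP_with f \<alpha> \<longleftrightarrow> f \<alpha> = [\<alpha>] \<and> (\<forall>\<beta>. \<beta> \<noteq> \<alpha> \<longrightarrow> (\<exists>\<gamma>. f \<beta> = f \<gamma> @ [\<beta>]))"

definition is_bLSP :: "('a \<Rightarrow> 'a list) \<Rightarrow> bool" where
  "is_bLSP f \<longleftrightarrow> (\<exists>\<alpha>. bLSP_with f \<alpha>)"

definition first :: "('a \<Rightarrow> 'a list) \<Rightarrow> 'a" where
  "first f = (THE \<alpha>. bLSP_with f \<alpha>)"

definition Fact :: "'a list set \<Rightarrow> 'a list set" where
  "Fact X = {u. \<exists>w\<in>X. \<exists>p s. w = p @ u @ s}"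

definition pref :: "'a list \<Rightarrow> 'a list set" where
  "pref w = {u. \<exists>s. w = u @ s}"

definition is_fragility ::
  "'a list \<Rightarrow> 'a \<Rightarrow> 'a \<Rightarrow> 'a \<Rightarrow> 'a \<Rightarrow> 'a \<Rightarrow> (nat \<Rightarrow> 'a) \<Rightarrow> bool" where
  "is_fragility u a b c \<beta> \<gamma> x \<longleftrightarrow>
     a \<noteq> b \<and> a \<noteq> c \<and> b \<noteq> c \<and> \<beta> \<noteq> \<gamma> \<and>
     is_prefix_inf (u @ [a]) x \<and>
     is_factor_inf (\<beta> # u @ [b]) x \<and> is_factor_inf (\<gamma> # u @ [c]) x"

definition fragile :: "'a \<Rightarrow> 'a \<Rightarrow> 'a \<Rightarrow> (nat \<Rightarrow> 'a) \<Rightarrow> bool" where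
  "fragile a b c x \<longleftrightarrow> (\<exists>\<beta> \<gamma> u. \<beta> \<noteq> \<gamma> \<and> is_fragility u a b c \<beta> \<gamma> x)"

definition Frag :: "(nat \<Rightarrow> 'a) \<Rightarrow> ('a \<times> 'a \<times> 'a \<times> 'a \<times> 'a) set" where
  "Frag x = {(a, b, c, \<beta>, \<gamma>). \<exists>u. is_fragility u a b c \<beta> \<gamma> x}"

definition LSP_breaking :: "('a \<Rightarrow> 'a list) \<Rightarrow> 'a \<Rightarrow> 'a \<Rightarrow> 'a \<Rightarrow> bool" where
  "LSP_breaking f a b c \<longleftrightarrow>
     (\<forall>x :: nat \<Rightarrow> 'a. fragile a b c x \<and> LSP x \<longrightarrow> \<not> LSP (morph_inf f x))"

type_synonym 'a state = "'a set \<times> ('a \<Rightarrow> 'a list) \<times> ('a \<times> 'a \<times> 'a \<times> 'a \<times> 'a) set"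

definition st_alph :: "'a state \<Rightarrow> 'a set" where "st_alph q = fst q"
definition st_bLSP :: "'a state \<Rightarrow> ('a \<Rightarrow> 'a list)" where "st_bLSP q = fst (snd q)"
definition st_set :: "'a state \<Rightarrow> ('a \<times> 'a \<times> 'a \<times> 'a \<times> 'a) set" where "st_set q = snd (snd q)"

definition is_state :: "'a state \<Rightarrow> bool" where
  "is_state q \<longleftrightarrow> is_bLSP (st_bLSP q)"

definition alph_img :: "('a \<Rightarrow> 'a list) \<Rightarrow> 'a set \<Rightarrow> 'a set" where
  "alph_img f B = (\<Union>b\<in>B. set (f b))"

definition transition :: "'a state \<Rightarrow> ('a \<Rightarrow> 'a list) \<Rightarrow> 'a state \<Rightarrow> bool" where
  "transition q f q' \<longleftrightarrow>
     is_state q \<and> is_state q' \<and> is_bLSP f \<and>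
     f = st_bLSP q \<and>
     st_alph q = alph_img f (st_alph q') \<and>
     (\<forall>(a, b, c, \<beta>, \<gamma>) \<in> st_set q'. \<not> LSP_breaking f a b c) \<and>
     st_set q = {(a, b, c, \<beta>, \<gamma>).
        a \<in> st_alph q \<and> b \<in> st_alph q \<and> c \<in> st_alph q \<and>
        \<beta> \<in> st_alph q \<and> \<gamma> \<in> st_alph q \<and>
        a \<noteq> b \<and> a \<noteq> c \<and> b \<noteq> c \<and> \<beta> \<noteq> \<gamma> \<and>
        ((a = first f \<and> [\<beta>, b] \<in> Fact (f ` st_alph q') \<and> [\<gamma>, c] \<in> Fact (f ` st_alph q')) \<or>
         (\<exists>a' b' c' x. (a', b', c', \<beta>, \<gamma>) \<in> st_set q' \<and>
            x @ [a] \<in> pref (f a' @ [first f]) \<and>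
            x @ [b] \<in> pref (f b' @ [first f]) \<and>
            x @ [c] \<in> pref (f c' @ [first f])))}"

end

theory Submission
  imports Defs
begin



lemma bLSP_props:
  assumes "bLSP_with f \<alpha>"
  shows "f d \<noteq> [] \<and> hd (f d) = \<alpha> \<and> last (f d) = d \<and> \<alpha> \<notin> set (tl (f d))"
proof -
  have "\<forall>d. length (f d) = n \<longrightarrow> f d \<noteq> [] \<and> hd (f d) = \<alpha> \<and> last (f d) = d \<and> \<alpha> \<notin> set (tl (f d))" for n
  proof (induction n rule: less_induct)
    case (less n)
    show ?case
    proof (intro allI impI)
      fix d assume ln: "length (f d) = n"
      show "f d \<noteq> [] \<and> hd (f d) = \<alpha> \<and> last (f d) = d \<and> \<alpha> \<notin> set (tl (f d))"
      proof (cases "d = \<alpha>")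
        case True then show ?thesis using assms by (simp add: bLSP_with_def)
      next
        case False
        then obtain g where g: "f d = f g @ [d]" using assms by (auto simp: bLSP_with_def)
        have "length (f g) < n" using g ln by simp
        with less have ih: "f g \<noteq> [] \<and> hd (f g) = \<alpha> \<and> last (f g) = g \<and> \<alpha> \<notin> set (tl (f g))" by blast
        have "tl (f d) = tl (f g) @ [d]" using g ih by simp
        then show ?thesis using g ih False by auto
      qed
    qed
  qed
  then show ?thesis by blast
qed

lemma first_eq: assumes "bLSP_with f \<alpha>" shows "first f = \<alpha>"
  unfolding first_def
proof (rule the_equality)
  show "bLSP_with f \<alpha>" by fact
  fix a assume a: "bLSP_with f a"
  show "a = \<alpha>"
  proof (rule ccontr)
    assume "a \<noteq> \<alpha>"
    then obtain g where "f a = f g @ [a]" using assms by (auto simp: bLSP_with_def)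
    moreover have "f a = [a]" using a by (simp add: bLSP_with_def)
    ultimately have "f g = []" by simp
    with bLSP_props[OF assms] show False by blast
  qed
qed

lemma morph_Nil[simp]: "morph f [] = []" by (simp add: morph_def)
lemma morph_Cons[simp]: "morph f (a # v) = f a @ morph f v" by (simp add: morph_def)
lemma morph_append[simp]: "morph f (u @ v) = morph f u @ morph f v" by (simp add: morph_def)

lemma morph_hd: assumes "bLSP_with f \<alpha>" "morph f v \<noteq> []" shows "hd (morph f v) = \<alpha>"
  using assms bLSP_props[OF assms(1)] by (cases v) auto

lemma f_app_eq:
  assumes B: "bLSP_with f \<alpha>" and e: "f a @ s = f b @ t"
    and s: "s = [] \<or> hd s = \<alpha>" and t: "t = [] \<or> hd t = \<alpha>"
  shows "f a = f b"
proof -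
  have P: "\<And>d. f d \<noteq> [] \<and> hd (f d) = \<alpha> \<and> last (f d) = d \<and> \<alpha> \<notin> set (tl (f d))"
    using bLSP_props[OF B] by blast
  from e obtain us where "(f a = f b @ us \<and> us @ s = t) \<or> (f a @ us = f b \<and> s = us @ t)"
    by (auto simp: append_eq_append_conv2)
  then show ?thesis
  proof
    assume h: "f a = f b @ us \<and> us @ s = t"
    show ?thesis
    proof (cases us)
      case Nil then show ?thesis using h by simp
    next
      case (Cons z zs)
      then have "z = \<alpha>" using h t by auto
      moreover have "tl (f a) = tl (f b) @ us" using h P[of b] by simp
      ultimately show ?thesis using P[of a] Cons by auto
    qed
  next
    assume h: "f a @ us = f b \<and> s = us @ t"
    show ?thesis
    proof (cases us)
      case Nil then show ?thesis using h by simp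
    next
      case (Cons z zs)
      then have "z = \<alpha>" using h s by auto
      moreover have "tl (f b) = tl (f a) @ us" using h[THEN conjunct1, symmetric] P[of a] by simp
      ultimately show ?thesis using P[of b] Cons by auto
    qed
  qed
qed

lemma morph_inj:
  assumes B: "bLSP_with f \<alpha>" shows "morph f v1 = morph f v2 \<Longrightarrow> v1 = v2"
proof (induction v1 arbitrary: v2)
  case Nil then show ?case using bLSP_props[OF B] by (cases v2) auto
next
  case (Cons a v1)
  then obtain b v2' where v2: "v2 = b # v2'" using bLSP_props[OF B] by (cases v2) auto
  have e: "f a @ morph f v1 = f b @ morph f v2'" using Cons.prems v2 by simp
  have "f a = f b" by (rule f_app_eq[OF B e]) (use morph_hd[OF B] in blast)+
  then have "a = b" using bLSP_props[OF B] by metis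
  then show ?case using e v2 Cons.IH by simp
qed




definition pos :: "('a \<Rightarrow> 'a list) \<Rightarrow> (nat \<Rightarrow> 'a) \<Rightarrow> nat \<Rightarrow> nat" where
  "pos f x k = length (morph f (inf_pref k x))"

lemma inf_pref_Suc: "inf_pref (Suc k) x = inf_pref k x @ [x k]" by (simp add: inf_pref_def)
lemma inf_pref_add: "inf_pref (m + d) x = inf_pref m x @ map x [m..<m+d]"
  by (simp add: inf_pref_def upt_add_eq_append[of 0 m d])

lemma pos_0[simp]: "pos f x 0 = 0" by (simp add: pos_def inf_pref_def)
lemma pos_Suc: "pos f x (Suc k) = pos f x k + length (f (x k))"
  by (simp add: pos_def inf_pref_Suc)

context
  fixes f :: "'a \<Rightarrow> 'a list" and \<alpha> :: 'a and x :: "nat \<Rightarrow> 'a"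
  assumes B: "bLSP_with f \<alpha>"
begin

lemma ne: "f d \<noteq> []" using bLSP_props[OF B] by blast
lemma hdf: "hd (f d) = \<alpha>" using bLSP_props[OF B] by blast
lemma lastf: "last (f d) = d" using bLSP_props[OF B] by blast
lemma tlf: "\<alpha> \<notin> set (tl (f d))" using bLSP_props[OF B] by blast

lemma pos_less_Suc: "pos f x k < pos f x (Suc k)"
  using ne by (simp add: pos_Suc)

lemma pos_smono: "strict_mono (pos f x)"
  using pos_less_Suc strict_mono_Suc_iff by blast

lemma pos_less_iff: "pos f x k < pos f x k' \<longleftrightarrow> k < k'"
  using pos_smono by (simp add: strict_mono_less)

lemma pos_le_iff: "pos f x k \<le> pos f x k' \<longleftrightarrow> k \<le> k'"
  using pos_smono by (simp add: strict_mono_less_eq)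

lemma pos_ge: "k \<le> pos f x k"
  using pos_smono by (simp add: strict_mono_imp_increasing)

lemma morph_pref_ext: "m \<le> m' \<Longrightarrow> \<exists>z. morph f (inf_pref m' x) = morph f (inf_pref m x) @ z"
  using inf_pref_add[of m "m' - m" x] by auto

lemma morph_inf_nth: assumes "n < pos f x m"
  shows "morph_inf f x n = morph f (inf_pref m x) ! n"
proof -
  obtain z1 where z1: "morph f (inf_pref (m + Suc n) x) = morph f (inf_pref m x) @ z1"
    using morph_pref_ext[of m "m + Suc n"] by auto
  obtain z2 where z2: "morph f (inf_pref (m + Suc n) x) = morph f (inf_pref (Suc n) x) @ z2"
    using morph_pref_ext[of "Suc n" "m + Suc n"] by auto
  have "n < pos f x (Suc n)" using pos_ge[of "Suc n"] by simp
  then have "morph f (inf_pref (m + Suc n) x) ! n = morph_inf f x n"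
    using z2 by (simp add: morph_inf_def pos_def nth_append)
  moreover have "morph f (inf_pref (m + Suc n) x) ! n = morph f (inf_pref m x) ! n"
    using z1 assms by (simp add: pos_def nth_append)
  ultimately show ?thesis by simp
qed

lemma blk_nth: assumes "j < length (f (x k))"
  shows "morph_inf f x (pos f x k + j) = f (x k) ! j"
proof -
  have "pos f x k + j < pos f x (Suc k)" using assms by (simp add: pos_Suc)
  then have "morph_inf f x (pos f x k + j) = morph f (inf_pref (Suc k) x) ! (pos f x k + j)"
    by (rule morph_inf_nth)
  then show ?thesis by (simp add: inf_pref_Suc nth_append pos_def)
qed

lemma blk_seg: "map (morph_inf f x) [pos f x k..<pos f x k + length (f (x k))] = f (x k)"
  by (rule nth_equalityI) (auto simp: blk_nth)

lemma seg: "i \<le> j \<Longrightarrow> map (morph_inf f x) [pos f x i..<pos f x j] = morph f (map x [i..<j])"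
proof (induction j)
  case 0 then show ?case by simp
next
  case (Suc j)
  show ?case
  proof (cases "i = Suc j")
    case True then show ?thesis by simp
  next
    case False
    then have ij: "i \<le> j" using Suc by simp
    have "[pos f x i..<pos f x (Suc j)] = [pos f x i..<pos f x j] @ [pos f x j..<pos f x j + length (f (x j))]"
      using ij by (simp add: pos_Suc pos_le_iff upt_add_eq_append[of "pos f x i" "pos f x j" "length (f (x j))"])
    then show ?thesis using Suc.IH[OF ij] blk_seg[of j] ij by simp
  qed
qed

lemma pos_at: "morph_inf f x (pos f x k) = \<alpha>"
  using blk_nth[of 0 k] ne hdf by (simp add: hd_conv_nth)

lemma block_ex: "\<exists>k. pos f x k \<le> n \<and> n < pos f x (Suc k)"
proof (induction n)
  case 0 show ?case using pos_less_Suc[of 0] by (intro exI[of _ 0]) simp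
next
  case (Suc n)
  then obtain k where k: "pos f x k \<le> n" "n < pos f x (Suc k)" by blast
  show ?case
  proof (cases "Suc n < pos f x (Suc k)")
    case True then show ?thesis using k by (intro exI[of _ k]) simp
  next
    case False then show ?thesis using k pos_less_Suc[of "Suc k"] by (intro exI[of _ "Suc k"]) simp
  qed
qed

lemma in_block: assumes "pos f x k < n" "n < pos f x (Suc k)" shows "morph_inf f x n \<noteq> \<alpha>"
proof -
  define j where "j = n - pos f x k"
  have n: "n = pos f x k + j" and j0: "0 < j" and jl: "j < length (f (x k))"
    using assms by (auto simp: j_def pos_Suc)
  have "morph_inf f x n = f (x k) ! j" using blk_nth[OF jl] n by simp
  also have "\<dots> = tl (f (x k)) ! (j - 1)" using j0 jl by (cases "f (x k)") (simp_all add: nth_Cons')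
  also have "\<dots> \<in> set (tl (f (x k)))" using j0 jl by (intro nth_mem) simp
  finally show ?thesis using tlf[of "x k"] by metis
qed

lemma alpha_iff: "morph_inf f x n = \<alpha> \<longleftrightarrow> (\<exists>k. n = pos f x k)"
proof
  assume a: "morph_inf f x n = \<alpha>"
  obtain k where k: "pos f x k \<le> n" "n < pos f x (Suc k)" using block_ex by blast
  show "\<exists>k. n = pos f x k"
  proof (cases "pos f x k = n")
    case True then show ?thesis by metis
  next
    case False then show ?thesis using in_block[of k n] k a by simp
  qed
qed (use pos_at in auto)

lemma before_pos: assumes "0 < k" shows "morph_inf f x (pos f x k - 1) = x (k - 1)"
proof -
  obtain k' where k: "k = Suc k'" using assms by (cases k) auto
  have "pos f x k - 1 = pos f x k' + (length (f (x k')) - 1)" using ne[of "x k'"] k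
    by (cases "f (x k')") (simp_all add: pos_Suc)
  then have "morph_inf f x (pos f x k - 1) = f (x k') ! (length (f (x k')) - 1)"
    using blk_nth[of "length (f (x k')) - 1" k'] ne[of "x k'"] by simp
  also have "\<dots> = x k'" using lastf[of "x k'"] ne[of "x k'"] by (simp add: last_conv_nth)
  finally show ?thesis using k by simp
qed

end



lemma map_upt_iff: "map g [i..<i + length v] = v \<longleftrightarrow> (\<forall>t<length v. g (i + t) = v ! t)"
proof
  assume e: "map g [i..<i + length v] = v"
  show "\<forall>t<length v. g (i + t) = v ! t"
  proof (intro allI impI)
    fix t assume t: "t < length v"
    have "map g [i..<i + length v] ! t = g (i + t)" using t by simp
    then show "g (i + t) = v ! t" using e by simp
  qed
next
  assume h: "\<forall>t<length v. g (i + t) = v ! t"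
  show "map g [i..<i + length v] = v"
    by (rule nth_equalityI) (simp_all add: h)
qed

lemma pref_same_len: assumes "p \<in> pref w" "q \<in> pref w" "length p = length q" shows "p = q"
proof -
  obtain s1 where s1: "w = p @ s1" using assms(1) by (auto simp: pref_def)
  obtain s2 where s2: "w = q @ s2" using assms(2) by (auto simp: pref_def)
  from s1 s2
  have "p @ s1 = q @ s2" by simp
  then show ?thesis using assms(3) append_eq_append_conv by blast
qed

lemma take_in_pref: "take m w \<in> pref w"
  unfolding pref_def by (rule CollectI, rule exI[of _ "drop m w"]) simp

definition lastA :: "'a \<Rightarrow> nat \<Rightarrow> 'a list \<Rightarrow> bool" where
  "lastA \<alpha> t0 u \<longleftrightarrow> t0 < length u \<and> u ! t0 = \<alpha> \<and> (\<forall>t. t0 < t \<and> t < length u \<longrightarrow> u ! t \<noteq> \<alpha>)"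

lemma lastA_unique: "lastA \<alpha> t1 u \<Longrightarrow> lastA \<alpha> t2 u \<Longrightarrow> t1 = t2"
  unfolding lastA_def by (cases t1 t2 rule: linorder_cases) auto

context
  fixes f :: "'a \<Rightarrow> 'a list" and \<alpha> :: 'a and x :: "nat \<Rightarrow> 'a"
  assumes B: "bLSP_with f \<alpha>"
begin

abbreviation "W \<equiv> morph_inf f x"
abbreviation "P \<equiv> pos f x"

lemma occ_decomp:
  assumes occ: "\<forall>t<length u + 1. W (s + t) = (u @ [e]) ! t" and un: "u \<noteq> []"
    and hs: "W s = \<alpha>"
  shows "\<exists>k K. s = P k \<and> k \<le> K \<and> lastA \<alpha> (P K - P k) u \<and>
     morph f (map x [k..<K]) = take (P K - P k) u \<and>
     drop (P K - P k) u @ [e] \<in> pref (f (x K) @ [\<alpha>])"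
proof -
  obtain k where k: "s = P k" using hs alpha_iff[OF B] by blast
  define L where "L = length u"
  have L0: "0 < L" using un by (simp add: L_def)
  obtain K where K: "P K \<le> s + L - 1" "s + L - 1 < P (Suc K)" using block_ex[OF B] by blast
  have "P k < P (Suc K)" using K k L0 by linarith
  then have kK: "k \<le> K" using pos_less_iff[OF B, of x k "Suc K"] by simp
  have PkK: "P k \<le> P K" using kK pos_le_iff[OF B] by blast
  have occ': "\<And>t. t < L \<Longrightarrow> W (s + t) = u ! t" using occ by (auto simp: L_def nth_append)
  have e: "W (s + L) = e" using occ by (auto simp: L_def)
  define t0 where "t0 = P K - P k"
  have t0L: "t0 < L" using K k L0 PkK by (simp add: t0_def)
  have la: "lastA \<alpha> t0 u"
    unfolding lastA_def
  proof (intro conjI allI impI)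
    show "t0 < length u" using t0L L_def by simp
    have "u ! t0 = W (s + t0)" using occ' t0L by simp
    also have "s + t0 = P K" using k PkK by (simp add: t0_def)
    finally show "u ! t0 = \<alpha>" using pos_at[OF B] by simp
  next
    fix t assume t: "t0 < t \<and> t < length u"
    have "P K < s + t" "s + t < P (Suc K)" using t k PkK K by (auto simp: t0_def L_def)
    then have "W (s + t) \<noteq> \<alpha>" by (rule in_block[OF B])
    then show "u ! t \<noteq> \<alpha>" using occ' t by (simp add: L_def)
  qed
  have "take t0 u = map W [P k..<P K]"
  proof (rule nth_equalityI)
    show "length (take t0 u) = length (map W [P k..<P K])" using t0L by (simp add: t0_def L_def)
  next
    fix j assume "j < length (take t0 u)"
    then have j: "j < t0" "j < L" using t0L by (auto simp: L_def)
    have "take t0 u ! j = W (s + j)" using occ'[OF j(2)] j(1) by simp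
    moreover have "map W [P k..<P K] ! j = W (P k + j)" using j(1) by (simp add: t0_def)
    ultimately show "take t0 u ! j = map W [P k..<P K] ! j" using k by simp
  qed
  then have tk: "morph f (map x [k..<K]) = take t0 u" using seg[OF B kK] by simp
  define m where "m = s + L + 1 - P K"
  have mle: "m \<le> length (f (x K)) + 1" using K by (simp add: m_def pos_Suc)
  have dr: "drop t0 u @ [e] = take m (f (x K) @ [\<alpha>])"
  proof (rule nth_equalityI)
    show "length (drop t0 u @ [e]) = length (take m (f (x K) @ [\<alpha>]))"
      using mle t0L k PkK K by (simp add: m_def t0_def L_def)
  next
    fix j assume j: "j < length (drop t0 u @ [e])"
    have sj: "P K + j = s + (t0 + j)" using k PkK by (simp add: t0_def)
    have lhs: "(drop t0 u @ [e]) ! j = W (P K + j)"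
    proof (cases "j < length u - t0")
      case True then show ?thesis using occ'[of "t0 + j"] sj t0L by (simp add: nth_append L_def add.assoc)
    next
      case False then have "t0 + j = L" using j t0L by (simp add: L_def)
      then show ?thesis using e sj False by (simp add: nth_append L_def)
    qed
    have jm: "j < m" using j t0L k PkK by (simp add: m_def t0_def L_def)
    show "(drop t0 u @ [e]) ! j = take m (f (x K) @ [\<alpha>]) ! j"
    proof (cases "j < length (f (x K))")
      case True then show ?thesis using lhs jm blk_nth[where f=f and x=x and k=K and j=j, OF B True] by (simp add: nth_append)
    next
      case False then have jeq: "j = length (f (x K))" using jm mle by simp
      then have "P K + j = P (Suc K)" by (simp add: pos_Suc)
      then have "W (P K + j) = \<alpha>" using pos_at[OF B, of x "Suc K"] by simp
      moreover have "take m (f (x K) @ [\<alpha>]) ! j = \<alpha>" using jm jeq by simp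
      ultimately show ?thesis using lhs by simp
    qed
  qed
  have "drop t0 u @ [e] \<in> pref (f (x K) @ [\<alpha>])" using dr take_in_pref[of m "f (x K) @ [\<alpha>]"] by simp
  then show ?thesis using k kK la tk unfolding t0_def by (intro exI[of _ k] exI[of _ K] conjI) assumption+
qed

end



context
  fixes f :: "'a \<Rightarrow> 'a list" and \<alpha> :: 'a and x :: "nat \<Rightarrow> 'a"
  assumes B: "bLSP_with f \<alpha>"
begin

lemma sub_nonempty:
  assumes fr: "is_fragility u a b c \<beta> \<gamma> (morph_inf f x)" and un: "u \<noteq> []"
  shows "\<exists>a' b' c' z. (a', b', c', \<beta>, \<gamma>) \<in> Frag x \<and>
            z @ [a] \<in> pref (f a' @ [\<alpha>]) \<and> z @ [b] \<in> pref (f b' @ [\<alpha>]) \<and>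
            z @ [c] \<in> pref (f c' @ [\<alpha>])"
proof -
  let ?W = "morph_inf f x"
  let ?P = "pos f x"
  have dist: "a \<noteq> b" "a \<noteq> c" "b \<noteq> c" "\<beta> \<noteq> \<gamma>" using fr unfolding is_fragility_def by blast+
  have pa: "u @ [a] = map ?W [0..<length (u @ [a])]"
    using fr unfolding is_fragility_def is_prefix_inf_def inf_pref_def by (elim conjE) assumption
  have "\<exists>i. \<beta> # u @ [b] = map ?W [i..<i + length (\<beta> # u @ [b])]"
    using fr unfolding is_fragility_def is_factor_inf_def by (elim conjE) assumption
  then obtain i1 where i1: "\<beta> # u @ [b] = map ?W [i1..<i1 + length (\<beta> # u @ [b])]"
    by (elim exE)
  have "\<exists>i. \<gamma> # u @ [c] = map ?W [i..<i + length (\<gamma> # u @ [c])]"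
    using fr unfolding is_fragility_def is_factor_inf_def by (elim conjE) assumption
  then obtain i2 where i2: "\<gamma> # u @ [c] = map ?W [i2..<i2 + length (\<gamma> # u @ [c])]"
    by (elim exE)
  have pa0: "map ?W [0..<0 + length (u @ [a])] = u @ [a]" using pa[symmetric] by (simp only: add_0)
  have pa': "\<forall>t<length u + 1. ?W (0 + t) = (u @ [a]) ! t"
    using pa0 unfolding map_upt_iff by simp
  have i1': "\<forall>t<length u + 2. ?W (i1 + t) = (\<beta> # u @ [b]) ! t"
    using i1[symmetric] unfolding map_upt_iff by simp
  have i2': "\<forall>t<length u + 2. ?W (i2 + t) = (\<gamma> # u @ [c]) ! t"
    using i2[symmetric] unfolding map_upt_iff by simp
  have hu: "u ! 0 = \<alpha>" using pa'[rule_format, of 0] pos_at[OF B, of x 0] un by (simp add: nth_append)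
  have o1: "\<forall>t<length u + 1. ?W (Suc i1 + t) = (u @ [b]) ! t"
  proof (intro allI impI)
    fix t assume "t < length u + 1"
    then have "?W (i1 + Suc t) = (\<beta> # u @ [b]) ! Suc t" using i1'[rule_format, of "Suc t"] by simp
    then show "?W (Suc i1 + t) = (u @ [b]) ! t" by simp
  qed
  have o2: "\<forall>t<length u + 1. ?W (Suc i2 + t) = (u @ [c]) ! t"
  proof (intro allI impI)
    fix t assume "t < length u + 1"
    then have "?W (i2 + Suc t) = (\<gamma> # u @ [c]) ! Suc t" using i2'[rule_format, of "Suc t"] by simp
    then show "?W (Suc i2 + t) = (u @ [c]) ! t" by simp
  qed
  have bet: "?W i1 = \<beta>" using i1'[rule_format, of 0] by simp
  have gam: "?W i2 = \<gamma>" using i2'[rule_format, of 0] by simp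
  have h1: "?W (Suc i1) = \<alpha>" using o1[rule_format, of 0] un hu by (simp add: nth_append)
  have h2: "?W (Suc i2) = \<alpha>" using o2[rule_format, of 0] un hu by (simp add: nth_append)
  have h0: "?W 0 = \<alpha>" using pos_at[OF B, of x 0] by simp
  obtain k0 K0 where d0: "0 = ?P k0" "k0 \<le> K0" "lastA \<alpha> (?P K0 - ?P k0) u"
     "morph f (map x [k0..<K0]) = take (?P K0 - ?P k0) u"
     "drop (?P K0 - ?P k0) u @ [a] \<in> pref (f (x K0) @ [\<alpha>])"
    using occ_decomp[OF B pa' un] h0 by auto
  obtain k1 K1 where d1: "Suc i1 = ?P k1" "k1 \<le> K1" "lastA \<alpha> (?P K1 - ?P k1) u"
     "morph f (map x [k1..<K1]) = take (?P K1 - ?P k1) u"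
     "drop (?P K1 - ?P k1) u @ [b] \<in> pref (f (x K1) @ [\<alpha>])"
    using occ_decomp[OF B o1 un h1] by auto
  obtain k2 K2 where d2: "Suc i2 = ?P k2" "k2 \<le> K2" "lastA \<alpha> (?P K2 - ?P k2) u"
     "morph f (map x [k2..<K2]) = take (?P K2 - ?P k2) u"
     "drop (?P K2 - ?P k2) u @ [c] \<in> pref (f (x K2) @ [\<alpha>])"
    using occ_decomp[OF B o2 un h2] by auto
  have k0: "k0 = 0" using d0(1) pos_less_iff[OF B, of x 0 k0] by (cases k0) auto
  define t0 where "t0 = ?P K0 - ?P k0"
  have t1: "?P K1 - ?P k1 = t0" using lastA_unique d0(3) d1(3) t0_def by metis
  have t2: "?P K2 - ?P k2 = t0" using lastA_unique d0(3) d2(3) t0_def by metis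
  have m1: "map x [k1..<K1] = map x [0..<K0]"
    using morph_inj[OF B] d0(4) d1(4) t1 k0 t0_def by metis
  have m2: "map x [k2..<K2] = map x [0..<K0]"
    using morph_inj[OF B] d0(4) d2(4) t2 k0 t0_def by metis
  have K1: "K1 = k1 + K0" using m1 d1(2) by (metis add_diff_inverse_nat diff_zero le_less_trans length_map length_upt not_less)
  have K2: "K2 = k2 + K0" using m2 d2(2) by (metis add_diff_inverse_nat diff_zero le_less_trans length_map length_upt not_less)
  have k1p: "0 < k1" using d1(1) pos_less_iff[OF B, of x 0 k1] by simp
  have k2p: "0 < k2" using d2(1) pos_less_iff[OF B, of x 0 k2] by simp
  have xb: "x (k1 - 1) = \<beta>" using before_pos[where x=x, OF B k1p] d1(1) bet by (metis diff_Suc_1)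
  have xg: "x (k2 - 1) = \<gamma>" using before_pos[where x=x, OF B k2p] d2(1) gam by (metis diff_Suc_1)
  define z where "z = drop t0 u"
  define u' where "u' = map x [0..<K0]"
  have za: "z @ [a] \<in> pref (f (x K0) @ [\<alpha>])" using d0(5) z_def t0_def by simp
  have zb: "z @ [b] \<in> pref (f (x K1) @ [\<alpha>])" using d1(5) z_def t1 by simp
  have zc: "z @ [c] \<in> pref (f (x K2) @ [\<alpha>])" using d2(5) z_def t2 by simp
  have dab: "x K0 \<noteq> x K1" using za zb dist pref_same_len by fastforce
  have dac: "x K0 \<noteq> x K2" using za zc dist pref_same_len by fastforce
  have dbc: "x K1 \<noteq> x K2" using zb zc dist pref_same_len by fastforce
  have f1: "\<beta> # u' @ [x K1] = map x [k1 - 1..<k1 - 1 + length (\<beta> # u' @ [x K1])]"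
  proof -
    have e1: "k1 - 1 + length (\<beta> # u' @ [x K1]) = Suc K1" using k1p K1 by (simp add: u'_def)
    have "[k1 - 1..<Suc K1] = (k1 - 1) # [k1..<Suc K1]" using k1p K1 by (simp add: upt_conv_Cons)
    also have "[k1..<Suc K1] = [k1..<K1] @ [K1]" using K1 by simp
    finally have "[k1 - 1..<k1 - 1 + length (\<beta> # u' @ [x K1])] = (k1 - 1) # [k1..<K1] @ [K1]"
      using e1 by simp
    then show ?thesis using xb m1[folded u'_def] by (simp only: list.map map_append append_Cons append_Nil)
  qed
  have f2: "\<gamma> # u' @ [x K2] = map x [k2 - 1..<k2 - 1 + length (\<gamma> # u' @ [x K2])]"
  proof -
    have e1: "k2 - 1 + length (\<gamma> # u' @ [x K2]) = Suc K2" using k2p K2 by (simp add: u'_def)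
    have "[k2 - 1..<Suc K2] = (k2 - 1) # [k2..<Suc K2]" using k2p K2 by (simp add: upt_conv_Cons)
    also have "[k2..<Suc K2] = [k2..<K2] @ [K2]" using K2 by simp
    finally have "[k2 - 1..<k2 - 1 + length (\<gamma> # u' @ [x K2])] = (k2 - 1) # [k2..<K2] @ [K2]"
      using e1 by simp
    then show ?thesis using xg m2[folded u'_def] by (simp only: list.map map_append append_Cons append_Nil)
  qed
  have pf: "u' @ [x K0] = inf_pref (length (u' @ [x K0])) x" by (simp add: u'_def inf_pref_def)
  have fr': "is_fragility u' (x K0) (x K1) (x K2) \<beta> \<gamma> x"
    unfolding is_fragility_def is_prefix_inf_def is_factor_inf_def
    using dab dac dbc dist f1 f2 pf apply (intro conjI) apply assumption+ apply (rule exI[of _ "k1 - 1"], assumption) apply (rule exI[of _ "k2 - 1"], assumption) done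
  show ?thesis using fr' za zb zc unfolding Frag_def by blast
qed

end



lemma occ_of_map: "map g [p..<p + length v] = v \<Longrightarrow> \<forall>t<length v. g (p + t) = v ! t"
  using map_upt_iff by blast

lemma occ_pref: "\<forall>t<length V. g (p + t) = V ! t \<Longrightarrow> v \<in> pref V \<Longrightarrow> map g [p..<p + length v] = v"
  unfolding map_upt_iff pref_def by (auto simp: nth_append)

lemma occ_drop: "\<forall>t<length V. g (p + t) = V ! t \<Longrightarrow> V = y @ V' \<Longrightarrow> \<forall>t<length V'. g (p + length y + t) = V' ! t"
  by (auto simp: nth_append add.assoc)

lemma two_in_list: "Suc j < length l \<Longrightarrow> l = take j l @ [l ! j, l ! Suc j] @ drop (Suc (Suc j)) l"
  by (metis Cons_nth_drop_Suc Suc_lessD append_Cons append_Nil append_take_drop_id)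

context
  fixes f :: "'a \<Rightarrow> 'a list" and \<alpha> :: 'a and x :: "nat \<Rightarrow> 'a"
  assumes B: "bLSP_with f \<alpha>"
begin

lemma ext_occ: assumes "p \<le> q" shows "\<forall>t<length (morph f (map x [p..<q])) + 1.
   morph_inf f x (pos f x p + t) = (morph f (map x [p..<q]) @ [\<alpha>]) ! t"
proof -
  have s: "map (morph_inf f x) [pos f x p..<pos f x q] = morph f (map x [p..<q])"
    using seg[OF B assms] by simp
  have l: "length (morph f (map x [p..<q])) = pos f x q - pos f x p"
    using arg_cong[OF s, of length] by simp
  have pq: "pos f x p \<le> pos f x q" using pos_le_iff[OF B] assms by blast
  show ?thesis
  proof (intro allI impI)
    fix t assume t: "t < length (morph f (map x [p..<q])) + 1"
    show "morph_inf f x (pos f x p + t) = (morph f (map x [p..<q]) @ [\<alpha>]) ! t"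
    proof (cases "t < length (morph f (map x [p..<q]))")
      case True
      then have "morph_inf f x (pos f x p + t) = map (morph_inf f x) [pos f x p..<pos f x q] ! t"
        using l by simp
      then show ?thesis using s True by (simp add: nth_append)
    next
      case False then have "pos f x p + t = pos f x q" using t l pq by simp
      then show ?thesis using False t pos_at[OF B, of x q] by (simp add: nth_append)
    qed
  qed
qed

lemma frag_lift:
  assumes fr: "is_fragility u' a' b' c' \<beta> \<gamma> x"
    and za: "z @ [a] \<in> pref (f a' @ [\<alpha>])" and zb: "z @ [b] \<in> pref (f b' @ [\<alpha>])"
    and zc: "z @ [c] \<in> pref (f c' @ [\<alpha>])"
    and d: "a \<noteq> b" "a \<noteq> c" "b \<noteq> c"
  shows "is_fragility (morph f u' @ z) a b c \<beta> \<gamma> (morph_inf f x)"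
proof -
  let ?W = "morph_inf f x"
  let ?n = "length u'"
  have bg: "\<beta> \<noteq> \<gamma>" using fr unfolding is_fragility_def by blast
  have pa0: "u' @ [a'] = map x [0..<length (u' @ [a'])]"
    using fr unfolding is_fragility_def is_prefix_inf_def inf_pref_def by (elim conjE) assumption
  have pa: "u' @ [a'] = map x [0..<?n + 1]" using pa0 by simp
  have fb0: "\<exists>i. \<beta> # u' @ [b'] = map x [i..<i + length (\<beta> # u' @ [b'])]"
    using fr unfolding is_fragility_def is_factor_inf_def by (elim conjE) assumption
  have fc0: "\<exists>i. \<gamma> # u' @ [c'] = map x [i..<i + length (\<gamma> # u' @ [c'])]"
    using fr unfolding is_fragility_def is_factor_inf_def by (elim conjE) assumption
  have fb: "\<exists>i. \<beta> # u' @ [b'] = map x [i..<i + (?n + 2)]" using fb0 by simp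
  have fc: "\<exists>i. \<gamma> # u' @ [c'] = map x [i..<i + (?n + 2)]" using fc0 by simp
  have E0: "\<forall>t<length (morph f (map x [0..<?n + 1])) + 1.
     ?W (pos f x 0 + t) = (morph f (map x [0..<?n + 1]) @ [\<alpha>]) ! t" by (rule ext_occ) simp
  have Me0: "morph f (map x [0..<?n + 1]) = morph f u' @ f a'"
    by (simp only: pa[symmetric] morph_Cons morph_append morph_Nil append_Nil2 append_assoc)
  have o0: "\<forall>t<length (morph f u' @ f a' @ [\<alpha>]). ?W (pos f x 0 + t) = (morph f u' @ f a' @ [\<alpha>]) ! t"
    using E0 unfolding Me0 by simp
  then have o0: "\<forall>t<length (morph f u' @ f a' @ [\<alpha>]). ?W (0 + t) = (morph f u' @ f a' @ [\<alpha>]) ! t"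
    by (simp only: pos_0)
  have "morph f u' @ z @ [a] \<in> pref (morph f u' @ f a' @ [\<alpha>])" using za by (auto simp: pref_def)
  from occ_pref[OF o0 this] have P: "is_prefix_inf ((morph f u' @ z) @ [a]) ?W"
    by (simp add: is_prefix_inf_def inf_pref_def)
  have F: "is_factor_inf (\<delta> # (morph f u' @ z) @ [e]) ?W"
    if fd: "\<exists>i. \<delta> # u' @ [d'] = map x [i..<i + (?n + 2)]" and ze: "z @ [e] \<in> pref (f d' @ [\<alpha>])"
    for \<delta> d' e
  proof -
    obtain i where i: "\<delta> # u' @ [d'] = map x [i..<i + (?n + 2)]" using fd by (elim exE)
    have E1: "\<forall>t<length (morph f (map x [i..<i + (?n + 2)])) + 1.
     ?W (pos f x i + t) = (morph f (map x [i..<i + (?n + 2)]) @ [\<alpha>]) ! t" by (rule ext_occ) simp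
    have Me: "morph f (map x [i..<i + (?n + 2)]) = f \<delta> @ morph f u' @ f d'"
      by (simp only: i[symmetric] morph_Cons morph_append morph_Nil append_Nil2 append_assoc)
    have o1: "\<forall>t<length (f \<delta> @ morph f u' @ f d' @ [\<alpha>]). ?W (pos f x i + t) = (f \<delta> @ morph f u' @ f d' @ [\<alpha>]) ! t"
      using E1 unfolding Me by simp
    have fd: "f \<delta> = butlast (f \<delta>) @ [\<delta>]"
      using ne[OF B] lastf[OF B] by (metis append_butlast_last_id)
    have "f \<delta> @ morph f u' @ f d' @ [\<alpha>] = butlast (f \<delta>) @ (\<delta> # morph f u' @ f d' @ [\<alpha>])"
      by (subst fd) simp
    from occ_drop[OF o1 this] have o2: "\<forall>t<length (\<delta> # morph f u' @ f d' @ [\<alpha>]).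
        ?W (pos f x i + length (butlast (f \<delta>)) + t) = (\<delta> # morph f u' @ f d' @ [\<alpha>]) ! t" .
    have "\<delta> # (morph f u' @ z) @ [e] \<in> pref (\<delta> # morph f u' @ f d' @ [\<alpha>])" using ze by (auto simp: pref_def)
    from occ_pref[OF o2 this] show ?thesis unfolding is_factor_inf_def by metis
  qed
  show ?thesis unfolding is_fragility_def
    using P F[OF fb zb] F[OF fc zc] d bg by (intro conjI) assumption+
qed

end



lemma in_map_range: "y \<in> set v \<Longrightarrow> v = map g L \<Longrightarrow> y \<in> range g"
  by auto

lemma map2: "map g [i..<i + length [y, z]] = [g i, g (Suc i)]"
  by (simp add: upt_conv_Cons)

lemma frag_range:
  assumes fr: "is_fragility u a b c \<beta> \<gamma> g"
  shows "a \<in> range g \<and> b \<in> range g \<and> c \<in> range g \<and> \<beta> \<in> range g \<and> \<gamma> \<in> range g"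
proof -
  have pa: "u @ [a] = map g [0..<length (u @ [a])]"
    using fr unfolding is_fragility_def is_prefix_inf_def inf_pref_def by (elim conjE) assumption
  have "\<exists>i. \<beta> # u @ [b] = map g [i..<i + length (\<beta> # u @ [b])]"
    using fr unfolding is_fragility_def is_factor_inf_def by (elim conjE) assumption
  then obtain i1 where i1: "\<beta> # u @ [b] = map g [i1..<i1 + length (\<beta> # u @ [b])]" by (elim exE)
  have "\<exists>i. \<gamma> # u @ [c] = map g [i..<i + length (\<gamma> # u @ [c])]"
    using fr unfolding is_fragility_def is_factor_inf_def by (elim conjE) assumption
  then obtain i2 where i2: "\<gamma> # u @ [c] = map g [i2..<i2 + length (\<gamma> # u @ [c])]" by (elim exE)
  have "a \<in> set (u @ [a])" "b \<in> set (\<beta> # u @ [b])" "\<beta> \<in> set (\<beta> # u @ [b])"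
    "c \<in> set (\<gamma> # u @ [c])" "\<gamma> \<in> set (\<gamma> # u @ [c])" by simp_all
  then show ?thesis using in_map_range pa i1 i2 by metis
qed

context
  fixes f :: "'a \<Rightarrow> 'a list" and \<alpha> :: 'a and x :: "nat \<Rightarrow> 'a"
  assumes B: "bLSP_with f \<alpha>"
begin

lemma fact2:
  assumes b: "morph_inf f x (Suc i) = b" and be: "morph_inf f x i = \<beta>" and ba: "b \<noteq> \<alpha>"
  shows "[\<beta>, b] \<in> Fact (f ` range x)"
proof -
  obtain K where K: "pos f x K \<le> Suc i" "Suc i < pos f x (Suc K)" using block_ex[OF B] by blast
  have "pos f x K \<noteq> Suc i" using pos_at[OF B, of x K] b ba by auto
  then have Ki: "pos f x K \<le> i" using K by simp
  define j where "j = i - pos f x K"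
  have ij: "i = pos f x K + j" using Ki by (simp add: j_def)
  have jl: "Suc j < length (f (x K))" using K ij by (simp add: pos_Suc)
  have "morph_inf f x i = f (x K) ! j" using ij blk_nth[where x=x and k=K and j=j, OF B] jl by simp
  moreover have "morph_inf f x (Suc i) = f (x K) ! Suc j"
    using ij blk_nth[where x=x and k=K and j="Suc j", OF B] jl by simp
  ultimately have "f (x K) = take j (f (x K)) @ [\<beta>, b] @ drop (Suc (Suc j)) (f (x K))"
    using two_in_list[OF jl] b be by simp
  then show ?thesis unfolding Fact_def by blast
qed

lemma fact_occ:
  assumes "[\<beta>, b] \<in> Fact (f ` range x)"
  shows "\<exists>i. morph_inf f x i = \<beta> \<and> morph_inf f x (Suc i) = b"
proof -
  obtain k p s where e: "f (x k) = p @ [\<beta>, b] @ s" using assms unfolding Fact_def by blast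
  have l1: "length p < length (f (x k))" "Suc (length p) < length (f (x k))" using e by simp_all
  have "morph_inf f x (pos f x k + length p) = \<beta>"
    using blk_nth[where x=x and k=k and j="length p", OF B l1(1)] e by (simp add: nth_append)
  moreover have "morph_inf f x (Suc (pos f x k + length p)) = b"
    using blk_nth[where x=x and k=k and j="Suc (length p)", OF B l1(2)] e by (simp add: nth_append)
  ultimately show ?thesis by blast
qed

lemma sub_empty:
  assumes fr: "is_fragility [] a b c \<beta> \<gamma> (morph_inf f x)"
  shows "a = \<alpha> \<and> [\<beta>, b] \<in> Fact (f ` range x) \<and> [\<gamma>, c] \<in> Fact (f ` range x)"
proof -
  have pa: "[a] = map (morph_inf f x) [0..<length [a]]"
    using fr unfolding is_fragility_def is_prefix_inf_def inf_pref_def by (elim conjE) (simp only: append_Nil)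
  then have a: "a = \<alpha>" using pos_at[OF B, of x 0] by simp
  have "\<exists>i. [\<beta>, b] = map (morph_inf f x) [i..<i + length [\<beta>, b]]"
    using fr unfolding is_fragility_def is_factor_inf_def by (elim conjE) (simp only: append_Nil)
  then obtain i1 where "[\<beta>, b] = map (morph_inf f x) [i1..<i1 + length [\<beta>, b]]" by (elim exE)
  then have i1: "morph_inf f x i1 = \<beta>" "morph_inf f x (Suc i1) = b" unfolding map2 by simp_all
  have "\<exists>i. [\<gamma>, c] = map (morph_inf f x) [i..<i + length [\<gamma>, c]]"
    using fr unfolding is_fragility_def is_factor_inf_def by (elim conjE) (simp only: append_Nil)
  then obtain i2 where "[\<gamma>, c] = map (morph_inf f x) [i2..<i2 + length [\<gamma>, c]]" by (elim exE)
  then have i2: "morph_inf f x i2 = \<gamma>" "morph_inf f x (Suc i2) = c" unfolding map2 by simp_all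
  have "b \<noteq> \<alpha>" "c \<noteq> \<alpha>" using fr a unfolding is_fragility_def by auto
  then show ?thesis using a fact2[OF i1(2) i1(1)] fact2[OF i2(2) i2(1)] by blast
qed

lemma lift_empty:
  assumes "a = \<alpha>" "[\<beta>, b] \<in> Fact (f ` range x)" "[\<gamma>, c] \<in> Fact (f ` range x)"
    "a \<noteq> b" "a \<noteq> c" "b \<noteq> c" "\<beta> \<noteq> \<gamma>"
  shows "is_fragility [] a b c \<beta> \<gamma> (morph_inf f x)"
proof -
  obtain i1 where i1: "morph_inf f x i1 = \<beta>" "morph_inf f x (Suc i1) = b" using fact_occ[OF assms(2)] by blast
  obtain i2 where i2: "morph_inf f x i2 = \<gamma>" "morph_inf f x (Suc i2) = c" using fact_occ[OF assms(3)] by blast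
  have p: "[] @ [a] = inf_pref (length ([] @ [a])) (morph_inf f x)"
    using pos_at[OF B, of x 0] assms(1) by (simp add: inf_pref_def)
  have f1: "\<beta> # [] @ [b] = map (morph_inf f x) [i1..<i1 + length (\<beta> # [] @ [b])]"
    using i1 map2[of "morph_inf f x" i1 \<beta> b] by simp
  have f2: "\<gamma> # [] @ [c] = map (morph_inf f x) [i2..<i2 + length (\<gamma> # [] @ [c])]"
    using i2 map2[of "morph_inf f x" i2 \<gamma> c] by simp
  show ?thesis unfolding is_fragility_def is_prefix_inf_def is_factor_inf_def
    using assms p
    apply (intro conjI) apply assumption+
    apply (rule exI[of _ i1], rule f1) apply (rule exI[of _ i2], rule f2) done
qed

lemma range_eq: "range (morph_inf f x) = alph_img f (range x)"
proof
  show "range (morph_inf f x) \<subseteq> alph_img f (range x)"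
  proof
    fix y assume "y \<in> range (morph_inf f x)"
    then obtain n where n: "y = morph_inf f x n" by blast
    obtain k where k: "pos f x k \<le> n" "n < pos f x (Suc k)" using block_ex[OF B] by blast
    define j where "j = n - pos f x k"
    have nj: "n = pos f x k + j" and jl: "j < length (f (x k))" using k by (auto simp: j_def pos_Suc)
    have "y = f (x k) ! j" using n nj blk_nth[where x=x and k=k and j=j, OF B jl] by simp
    then have "y \<in> set (f (x k))" using jl by simp
    then show "y \<in> alph_img f (range x)" unfolding alph_img_def by blast
  qed
next
  show "alph_img f (range x) \<subseteq> range (morph_inf f x)"
  proof
    fix y assume "y \<in> alph_img f (range x)"
    then obtain k where "y \<in> set (f (x k))" unfolding alph_img_def by blast
    then obtain j where j: "j < length (f (x k))" "f (x k) ! j = y" by (auto simp: in_set_conv_nth)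
    then have "morph_inf f x (pos f x k + j) = y" using blk_nth[where x=x and k=k and j=j, OF B] by simp
    then show "y \<in> range (morph_inf f x)" by (metis rangeI)
  qed
qed

end



lemma char:
  assumes B: "bLSP_with f \<alpha>"
  shows "(a, b, c, \<beta>, \<gamma>) \<in> Frag (morph_inf f x) \<longleftrightarrow>
     (a \<in> range (morph_inf f x) \<and> b \<in> range (morph_inf f x) \<and> c \<in> range (morph_inf f x) \<and>
      \<beta> \<in> range (morph_inf f x) \<and> \<gamma> \<in> range (morph_inf f x) \<and>
      a \<noteq> b \<and> a \<noteq> c \<and> b \<noteq> c \<and> \<beta> \<noteq> \<gamma> \<and>
      ((a = first f \<and> [\<beta>, b] \<in> Fact (f ` range x) \<and> [\<gamma>, c] \<in> Fact (f ` range x)) \<or>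
       (\<exists>a' b' c' z. (a', b', c', \<beta>, \<gamma>) \<in> Frag x \<and>
          z @ [a] \<in> pref (f a' @ [first f]) \<and>
          z @ [b] \<in> pref (f b' @ [first f]) \<and>
          z @ [c] \<in> pref (f c' @ [first f]))))"
    (is "?L \<longleftrightarrow> ?R")
proof
  have fst: "first f = \<alpha>" by (rule first_eq[OF B])
  assume ?L
  then obtain u where fr: "is_fragility u a b c \<beta> \<gamma> (morph_inf f x)" unfolding Frag_def by blast
  have rg: "a \<in> range (morph_inf f x) \<and> b \<in> range (morph_inf f x) \<and> c \<in> range (morph_inf f x) \<and>
      \<beta> \<in> range (morph_inf f x) \<and> \<gamma> \<in> range (morph_inf f x)" by (rule frag_range[OF fr])
  have d: "a \<noteq> b" "a \<noteq> c" "b \<noteq> c" "\<beta> \<noteq> \<gamma>" using fr unfolding is_fragility_def by blast+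
  show ?R
  proof (cases "u = []")
    case True
    then have "a = \<alpha> \<and> [\<beta>, b] \<in> Fact (f ` range x) \<and> [\<gamma>, c] \<in> Fact (f ` range x)"
      using sub_empty[OF B] fr by blast
    then show ?thesis using rg d fst by simp
  next
    case False
    from sub_nonempty[OF B fr False] show ?thesis using rg d fst by simp
  qed
next
  have fst: "first f = \<alpha>" by (rule first_eq[OF B])
  assume R: ?R
  then have d: "a \<noteq> b" "a \<noteq> c" "b \<noteq> c" "\<beta> \<noteq> \<gamma>" by blast+
  show ?L
  proof (cases "a = first f \<and> [\<beta>, b] \<in> Fact (f ` range x) \<and> [\<gamma>, c] \<in> Fact (f ` range x)")
    case True
    then have "is_fragility [] a b c \<beta> \<gamma> (morph_inf f x)"
      using lift_empty[OF B] d fst by blast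
    then show ?thesis unfolding Frag_def by blast
  next
    case False
    then obtain a' b' c' z where h: "(a', b', c', \<beta>, \<gamma>) \<in> Frag x"
      "z @ [a] \<in> pref (f a' @ [\<alpha>])" "z @ [b] \<in> pref (f b' @ [\<alpha>])" "z @ [c] \<in> pref (f c' @ [\<alpha>])"
      using R fst by blast
    from h(1) obtain u' where "is_fragility u' a' b' c' \<beta> \<gamma> x" unfolding Frag_def by blast
    from frag_lift[OF B this h(2-4) d(1-3)] show ?thesis unfolding Frag_def by blast
  qed
qed

theorem lemma5:
  fixes f g :: "'a::finite \<Rightarrow> 'a list"
    and w w' w'' :: "nat \<Rightarrow> 'a"
  assumes "LSP w" and "LSP w'"
    and "is_bLSP f" and "w = morph_inf f w'"
    and "is_bLSP g" and "w' = morph_inf g w''"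
  shows "transition (range w, f, Frag w) f (range w', g, Frag w')"
proof -
  obtain \<alpha> where B: "bLSP_with f \<alpha>" using assms(3) unfolding is_bLSP_def by blast
  have rng: "range w = alph_img f (range w')" using range_eq[OF B] assms(4) by simp
  have brk: "\<forall>(a, b, c, \<beta>, \<gamma>) \<in> Frag w'. \<not> LSP_breaking f a b c"
  proof (intro ballI, clarify)
    fix a b c \<beta> \<gamma> assume "(a, b, c, \<beta>, \<gamma>) \<in> Frag w'" and br: "LSP_breaking f a b c"
    then obtain u where fr: "is_fragility u a b c \<beta> \<gamma> w'" unfolding Frag_def by blast
    have "\<beta> \<noteq> \<gamma>" using fr unfolding is_fragility_def by blast
    then have "fragile a b c w'" unfolding fragile_def using fr by blast
    then have "\<not> LSP (morph_inf f w')" using br[unfolded LSP_breaking_def, rule_format, of w'] assms(2) by blast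
    then show False using assms(1,4) by simp
  qed
  have st: "Frag w = {(a, b, c, \<beta>, \<gamma>).
        a \<in> range w \<and> b \<in> range w \<and> c \<in> range w \<and>
        \<beta> \<in> range w \<and> \<gamma> \<in> range w \<and>
        a \<noteq> b \<and> a \<noteq> c \<and> b \<noteq> c \<and> \<beta> \<noteq> \<gamma> \<and>
        ((a = first f \<and> [\<beta>, b] \<in> Fact (f ` range w') \<and> [\<gamma>, c] \<in> Fact (f ` range w')) \<or>
         (\<exists>a' b' c' x. (a', b', c', \<beta>, \<gamma>) \<in> Frag w' \<and>
            x @ [a] \<in> pref (f a' @ [first f]) \<and>
            x @ [b] \<in> pref (f b' @ [first f]) \<and>
            x @ [c] \<in> pref (f c' @ [first f])))}"
  proof (rule set_eqI)
    fix t :: "'a \<times> 'a \<times> 'a \<times> 'a \<times> 'a"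
    obtain a b c \<beta> \<gamma> where t: "t = (a, b, c, \<beta>, \<gamma>)" using prod_cases5 by metis
    show "t \<in> Frag w \<longleftrightarrow> t \<in> {(a, b, c, \<beta>, \<gamma>).
        a \<in> range w \<and> b \<in> range w \<and> c \<in> range w \<and>
        \<beta> \<in> range w \<and> \<gamma> \<in> range w \<and>
        a \<noteq> b \<and> a \<noteq> c \<and> b \<noteq> c \<and> \<beta> \<noteq> \<gamma> \<and>
        ((a = first f \<and> [\<beta>, b] \<in> Fact (f ` range w') \<and> [\<gamma>, c] \<in> Fact (f ` range w')) \<or>
         (\<exists>a' b' c' x. (a', b', c', \<beta>, \<gamma>) \<in> Frag w' \<and>
            x @ [a] \<in> pref (f a' @ [first f]) \<and>
            x @ [b] \<in> pref (f b' @ [first f]) \<and>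
            x @ [c] \<in> pref (f c' @ [first f])))}"
      unfolding t mem_Collect_eq prod.case assms(4) by (rule char[OF B])
  qed
  show ?thesis
    unfolding transition_def is_state_def st_bLSP_def st_alph_def st_set_def fst_conv snd_conv
    using assms(3) assms(5) rng brk st by (intro conjI) (assumption | rule refl)+
qed



end
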